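(* For every $\varepsilon>0$ there exists $C_\varepsilon>0$ such that for every integer $N\ge1$, \[ \max_{\alpha\in\mathcal O_N}\ \sum_{\beta\in\mathcal O_N}\sqrt{\Gamma_{\alpha\beta}}\le C_\varepsilon N^{4+\varepsilon}. \]
   Context: For an integer $N\ge1$, $\Lambda_N:=\{k\in\mathbb Z^3\setminus\{0\}:|k|_\infty\le N\}$. The full octahedral group $O_h$ is the group of the 48 signed coordinate permutations of $\mathbb Z^3$; it acts on $\Lambda_N$ and $\mathcal O_N:=\Lambda_N/O_h$ is the set of orbits. For $\alpha,\beta\in\mathcal O_N$, $\Gamma_{\alpha\beta}:=\#\{(k,p,q):k\in\alpha,\ p\in\beta,\ q=k-p\in\Lambda_N\}$. *)

theory Defs
  imports Complex_Main "HOL-Combinatorics.Permutations"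
begin

type_synonym pt = "int \<times> int \<times> int"

definition coord :: "pt \<Rightarrow> nat \<Rightarrow> int" where
  "coord x i = (case x of (a, b, c) \<Rightarrow> (if i = 0 then a else if i = 1 then b else c))"

definition supnorm :: "pt \<Rightarrow> int" where
  "supnorm x = (case x of (a, b, c) \<Rightarrow> max \<bar>a\<bar> (max \<bar>b\<bar> \<bar>c\<bar>))"

definition psub :: "pt \<Rightarrow> pt \<Rightarrow> pt" where
  "psub x y = (case x of (a, b, c) \<Rightarrow> case y of (a', b', c') \<Rightarrow> (a - a', b - b', c - c'))"

definition Lambda :: "nat \<Rightarrow> pt set" where
  "Lambda N = {k. k \<noteq> (0, 0, 0) \<and> supnorm k \<le> int N}"

definition Oh :: "(pt \<Rightarrow> pt) set" where
  "Oh = {(\<lambda>x. (s 0 * coord x (\<sigma> 0), s 1 * coord x (\<sigma> 1), s 2 * coord x (\<sigma> 2))) |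
           \<sigma> s. \<sigma> permutes {0, 1, 2} \<and> (\<forall>i\<in>{0,1,2::nat}. s i \<in> {-1, 1::int})}"

definition orbit :: "pt \<Rightarrow> pt set" where
  "orbit k = (\<lambda>g. g k) ` Oh"

definition orbits :: "nat \<Rightarrow> pt set set" where
  "orbits N = orbit ` Lambda N"

definition Gamma :: "nat \<Rightarrow> pt set \<Rightarrow> pt set \<Rightarrow> nat" where
  "Gamma N \<alpha> \<beta> = card {(k, p, q). k \<in> \<alpha> \<and> p \<in> \<beta> \<and> q = psub k p \<and> q \<in> Lambda N}"

end

theory Submission
  imports Defs
begin

lemma coord_in: "coord (a,b,c) j \<in> {a,b,c}"
  by (auto simp: coord_def)

lemma orbit_sub:
  "orbit (a,b,c) \<subseteq> (let S = {a,-a,b,-b,c,-c} in S \<times> S \<times> S)"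
proof
  fix y assume "y \<in> orbit (a,b,c)"
  then obtain \<sigma> :: "nat \<Rightarrow> nat" and s :: "nat \<Rightarrow> int" where y: "y = (s 0 * coord (a,b,c) (\<sigma> 0), s 1 * coord (a,b,c) (\<sigma> 1), s 2 * coord (a,b,c) (\<sigma> 2))"
    and s: "\<forall>i\<in>{0,1,2::nat}. s i \<in> {-1, 1::int}"
    unfolding orbit_def Oh_def by blast
  have h: "s i * coord (a,b,c) j \<in> {a,-a,b,-b,c,-c}" if "i \<in> {0,1,2}" for i j
  proof -
    have "s i \<in> {-1,1}" using s that by auto
    moreover have "coord (a,b,c) j \<in> {a,b,c}" by (rule coord_in)
    ultimately show ?thesis by auto
  qed
  show "y \<in> (let S = {a,-a,b,-b,c,-c} in S \<times> S \<times> S)"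
    unfolding Let_def y by (intro SigmaI) (rule h; simp)+
qed

lemma orbit_fin_card: "finite (orbit k) \<and> card (orbit k) \<le> 216"
proof -
  obtain a b c where k: "k = (a,b,c)" by (cases k) auto
  let ?S = "{a,-a,b,-b,c,-c}"
  have cS: "card ?S \<le> 6" using card_length[of "[a,-a,b,-b,c,-c]"] by simp
  have "card (?S \<times> ?S \<times> ?S) \<le> 216"
  proof -
    have "card (?S \<times> ?S \<times> ?S) = card ?S * (card ?S * card ?S)" by (simp only: card_cartesian_product)
    also have "\<dots> \<le> 6 * (6 * 6)" using cS by (intro mult_mono) auto
    finally show ?thesis by simp
  qed
  moreover have "finite (?S \<times> ?S \<times> ?S)" by simp
  ultimately show ?thesis using orbit_sub[of a b c] k
    by (metis (no_types, lifting) card_mono finite_subset order_trans)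
qed

lemma Gamma_le: "\<alpha> \<in> orbits N \<Longrightarrow> \<beta> \<in> orbits N \<Longrightarrow> Gamma N \<alpha> \<beta> \<le> 216 * 216"
proof -
  assume a: "\<alpha> \<in> orbits N" and b: "\<beta> \<in> orbits N"
  have fa: "finite \<alpha>" "card \<alpha> \<le> 216" using a orbit_fin_card unfolding orbits_def by auto
  have fb: "finite \<beta>" "card \<beta> \<le> 216" using b orbit_fin_card unfolding orbits_def by auto
  have "{(k, p, q). k \<in> \<alpha> \<and> p \<in> \<beta> \<and> q = psub k p \<and> q \<in> Lambda N}
     \<subseteq> (\<lambda>(k,p). (k,p,psub k p)) ` (\<alpha> \<times> \<beta>)" by auto
  hence "Gamma N \<alpha> \<beta> \<le> card ((\<lambda>(k,p). (k,p,psub k p)) ` (\<alpha> \<times> \<beta>))"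
    unfolding Gamma_def using fa fb by (intro card_mono) auto
  also have "\<dots> \<le> card (\<alpha> \<times> \<beta>)" by (rule card_image_le) (use fa fb in auto)
  also have "\<dots> = card \<alpha> * card \<beta>" by (simp add: card_cartesian_product)
  also have "\<dots> \<le> 216 * 216" using fa fb by (intro mult_mono) auto
  finally show ?thesis .
qed

lemma Lambda_sub: "Lambda N \<subseteq> {-int N..int N} \<times> {-int N..int N} \<times> {-int N..int N}"
  by (auto simp: Lambda_def supnorm_def)

lemma Lambda_card: "finite (Lambda N) \<and> card (Lambda N) \<le> (2*N+1)^3"
proof -
  have "card ({-int N..int N} \<times> {-int N..int N} \<times> {-int N..int N}) = (2*N+1)^3"
    by (simp add: card_cartesian_product power3_eq_cube) (simp add: nat_mult_distrib nat_add_distrib)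
  thus ?thesis using Lambda_sub[of N]
    by (metis card_mono finite_SigmaI finite_atLeastAtMost_int finite_subset)
qed

theorem proposition4p8:
  shows "\<forall>\<epsilon>::real. \<epsilon> > 0 \<longrightarrow> (\<exists>C::real. C > 0 \<and> (\<forall>N::nat. N \<ge> 1 \<longrightarrow>
           Max ((\<lambda>\<alpha>. \<Sum>\<beta>\<in>orbits N. sqrt (real (Gamma N \<alpha> \<beta>))) ` orbits N)
             \<le> C * real N powr (4 + \<epsilon>)))"
proof (intro allI impI exI[of _ "216 * 27"] conjI)
  fix \<epsilon> :: real and N :: nat
  assume e: "\<epsilon> > 0" and N: "N \<ge> 1"
  have fin: "finite (orbits N)" using Lambda_card unfolding orbits_def by auto
  have cardO: "card (orbits N) \<le> (2*N+1)^3"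
    using Lambda_card[of N] card_image_le unfolding orbits_def by (metis order_trans)
  have ne: "orbits N \<noteq> {}"
  proof -
    have "(1,0,0) \<in> Lambda N" using N by (auto simp: Lambda_def supnorm_def)
    thus ?thesis unfolding orbits_def by auto
  qed
  have "(2*N+1)^3 \<le> (3*N)^3" using N by (intro power_mono) auto
  hence "real ((2*N+1)^3) \<le> real (27 * N ^ 3)" by (subst of_nat_le_iff) (simp add: power_mult_distrib)
  also have "\<dots> = 27 * real N ^ 3" by simp
  also have "\<dots> \<le> 27 * real N ^ 4" using N by (intro mult_left_mono power_increasing) auto
  also have "real N ^ 4 = real N powr 4" using N by (simp add: powr_realpow)
  also have "\<dots> \<le> real N powr (4 + \<epsilon>)" using N e by (intro powr_mono) auto
  finally have key: "real ((2*N+1)^3) \<le> 27 * real N powr (4 + \<epsilon>)" by simp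
  show "Max ((\<lambda>\<alpha>. \<Sum>\<beta>\<in>orbits N. sqrt (real (Gamma N \<alpha> \<beta>))) ` orbits N)
             \<le> (216 * 27) * real N powr (4 + \<epsilon>)"
  proof (subst Max_le_iff)
    show "finite ((\<lambda>\<alpha>. \<Sum>\<beta>\<in>orbits N. sqrt (real (Gamma N \<alpha> \<beta>))) ` orbits N)" using fin by simp
    show "(\<lambda>\<alpha>. \<Sum>\<beta>\<in>orbits N. sqrt (real (Gamma N \<alpha> \<beta>))) ` orbits N \<noteq> {}" using ne by simp
    show "\<forall>a\<in>(\<lambda>\<alpha>. \<Sum>\<beta>\<in>orbits N. sqrt (real (Gamma N \<alpha> \<beta>))) ` orbits N. a \<le> (216 * 27) * real N powr (4 + \<epsilon>)"
    proof
      fix x assume "x \<in> (\<lambda>\<alpha>. \<Sum>\<beta>\<in>orbits N. sqrt (real (Gamma N \<alpha> \<beta>))) ` orbits N"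
      then obtain \<alpha> where a: "\<alpha> \<in> orbits N" and x: "x = (\<Sum>\<beta>\<in>orbits N. sqrt (real (Gamma N \<alpha> \<beta>)))" by auto
      have "x \<le> (\<Sum>\<beta>\<in>orbits N. 216)"
        unfolding x
      proof (rule sum_mono)
        fix \<beta> assume b: "\<beta> \<in> orbits N"
        have "real (Gamma N \<alpha> \<beta>) \<le> 216^2" using Gamma_le[OF a b] by (simp add: power2_eq_square flip: of_nat_le_iff)
        hence "sqrt (real (Gamma N \<alpha> \<beta>)) \<le> sqrt (216^2)" by (rule real_sqrt_le_mono)
        thus "sqrt (real (Gamma N \<alpha> \<beta>)) \<le> 216" by simp
      qed
      also have "\<dots> = 216 * real (card (orbits N))" by simp
      also have "\<dots> \<le> 216 * real ((2*N+1)^3)" using cardO by (intro mult_left_mono) (simp only: of_nat_le_iff, simp)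
      also have "\<dots> \<le> 216 * (27 * real N powr (4 + \<epsilon>))" using key by (intro mult_left_mono) auto
      finally show "x \<le> (216 * 27) * real N powr (4 + \<epsilon>)" by simp
    qed
  qed
qed simp

end
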